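(* Let $m,n\ge 0$ be integers with $m-n\equiv 1\pmod 2$, put $N=m+n$ and $k=\frac{N-1}{2}$. Let $1\le p,q,r<\infty$ satisfy $\frac1r=\frac1p+\frac1q-1$. Then $$\left(\frac{2}{r+1}+\binom{N}{k}^r+\sum_{\substack{j=0\\ j\ne k}}^{N-1}\frac{\binom{N}{j+1}^{r+1}-\binom{N}{j}^{r+1}}{(r+1)\left[\binom{N}{j+1}-\binom{N}{j}\right]}\right)^{1/r} \le \Big(\sum_{j=0}^{m}\binom{m}{j}^q\Big)^{1/q}\Big(\sum_{j=0}^{n}\binom{n}{j}^p\Big)^{1/p}.$$
   Context: Binomial coefficients have their usual meaning. *)

theory Defs
  imports Complex_Main
begin

end

theory Submission imports Defs "HOL-Analysis.Analysis" begin

lemma tangent_powr: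
  fixes x y r :: real
  assumes "x > 0" "y > 0" "r \<ge> 1"
  shows "x powr r - y powr r \<ge> (r * y powr (r - 1)) * (x - y)"
  using assms
  by (intro convex_on_imp_above_tangent[where A = "{0<..}"] powr_convex)
     (auto intro!: derivative_eq_intros simp: interior_open)

lemma trap_lt:
  fixes a b r :: real
  assumes "0 < a" "a < b" "r \<ge> 1"
  shows "(b powr (r+1) - a powr (r+1)) / ((r+1)*(b-a)) \<le> (a powr r + b powr r)/2"
proof -
  define \<phi> where "\<phi> = (\<lambda>x. (r+1)*(x-a)*(a powr r + x powr r) - 2*(x powr (r+1) - a powr (r+1)))"
  have "\<phi> a \<le> \<phi> b"
  proof (rule DERIV_nonneg_imp_increasing_open[of a b \<phi>])
    show "a \<le> b" using assms by simp
    fix x assume x: "a < x" "x < b"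
    have xp: "x > 0" using x assms by auto
    have d: "(\<phi> has_real_derivative
       (r+1)*(a powr r + x powr r) + (r+1)*(x-a)*(r * x powr (r-1)) - 2*((r+1) * x powr r)) (at x)"
      unfolding \<phi>_def using xp
      by (auto intro!: derivative_eq_intros)
    have t: "a powr r - x powr r \<ge> (r * x powr (r - 1)) * (a - x)"
      using tangent_powr[of a x r] assms xp by auto
    have "(r+1)*(a powr r + x powr r) + (r+1)*(x-a)*(r * x powr (r-1)) - 2*((r+1) * x powr r)
        = (r+1) * ((a powr r - x powr r) - (r * x powr (r-1))*(a - x))"
      by (simp add: algebra_simps)
    also have "\<dots> \<ge> 0" using t assms by auto
    finally show "\<exists>y. (\<phi> has_real_derivative y) (at x) \<and> 0 \<le> y" using d by blast
  next
    show "continuous_on {a..b} \<phi>" unfolding \<phi>_def using assms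
      by (intro continuous_intros) auto
  qed
  hence "0 \<le> \<phi> b" by (simp add: \<phi>_def)
  hence "2*(b powr (r+1) - a powr (r+1)) \<le> (r+1)*(b-a)*(a powr r + b powr r)"
    by (simp add: \<phi>_def)
  moreover have "(r+1)*(b-a) > 0" using assms by auto
  ultimately show ?thesis by (simp add: divide_le_eq field_simps)
qed

lemma trap:
  fixes a b r :: real
  assumes "0 < a" "0 < b" "r \<ge> 1"
  shows "(b powr (r+1) - a powr (r+1)) / ((r+1)*(b-a)) \<le> (a powr r + b powr r)/2"
proof (cases a b rule: linorder_cases)
  case less then show ?thesis using trap_lt[of a b r] assms by auto
next
  case equal then show ?thesis by simp
next
  case greater
  have "(b powr (r+1) - a powr (r+1)) / ((r+1)*(b-a)) = (a powr (r+1) - b powr (r+1)) / ((r+1)*(a-b))"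
    by (metis (no_types, opaque_lifting) minus_diff_eq minus_divide_divide mult_minus_right)
  also have "\<dots> \<le> (b powr r + a powr r)/2" using trap_lt[of b a r] assms greater by auto
  finally show ?thesis by (simp add: add.commute)
qed

lemma amgm3:
  fixes x y z \<alpha> \<beta> \<gamma> :: real
  assumes "x \<ge> 0" "y \<ge> 0" "z \<ge> 0" "\<alpha> \<ge> 0" "\<beta> \<ge> 0" "\<gamma> \<ge> 0" "\<alpha> + \<beta> + \<gamma> = 1"
  shows "x powr \<alpha> * y powr \<beta> * z powr \<gamma> \<le> \<alpha>*x + \<beta>*y + \<gamma>*z"
proof (cases "x = 0 \<or> y = 0 \<or> z = 0")
  case True
  then have "x powr \<alpha> * y powr \<beta> * z powr \<gamma> = 0" by auto
  moreover have "\<alpha>*x + \<beta>*y + \<gamma>*z \<ge> 0" using assms by simp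
  ultimately show ?thesis by linarith
next
  case False
  then have xp: "x > 0" "y > 0" "z > 0" using assms by auto
  define s where "s = \<alpha> + \<beta>"
  show ?thesis
  proof (cases "s = 0")
    case True
    then have "\<alpha> = 0" "\<beta> = 0" "\<gamma> = 1" using assms s_def by auto
    then show ?thesis using xp by simp
  next
    case False
    then have sp: "s > 0" using assms s_def by auto
    define w where "w = (\<alpha>/s)*x + (\<beta>/s)*y"
    have wp: "w > 0"
    proof -
      have "\<alpha>/s*x \<ge> 0" "\<beta>/s*y \<ge> 0" using assms sp xp by auto
      moreover have "\<alpha>/s*x > 0 \<or> \<beta>/s*y > 0"
        using sp s_def xp assms by (cases "\<alpha> = 0") auto
      ultimately show ?thesis unfolding w_def by linarith
    qed
    have e: "\<alpha>/s + \<beta>/s = 1" using sp s_def by (simp add: add_divide_distrib[symmetric])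
    have "x powr (\<alpha>/s) * y powr (\<beta>/s) \<le> w"
      unfolding w_def using Youngs_inequality_0[of "\<alpha>/s" "\<beta>/s" x y] assms sp xp e by auto
    hence "(x powr (\<alpha>/s) * y powr (\<beta>/s)) powr s \<le> w powr s"
      using sp by (intro powr_mono2) auto
    moreover have "(x powr (\<alpha>/s) * y powr (\<beta>/s)) powr s = x powr \<alpha> * y powr \<beta>"
      using sp xp by (simp add: powr_mult powr_powr)
    ultimately have 1: "x powr \<alpha> * y powr \<beta> \<le> w powr s" by simp
    have "x powr \<alpha> * y powr \<beta> * z powr \<gamma> \<le> w powr s * z powr \<gamma>"
      using 1 by (intro mult_right_mono) auto
    also have "\<dots> \<le> s * w + \<gamma> * z"
      using Youngs_inequality_0[of s \<gamma> w z] assms sp wp xp s_def by auto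
    also have "s * w = \<alpha>*x + \<beta>*y" unfolding w_def using sp by (simp add: field_simps)
    finally show ?thesis by simp
  qed
qed

lemma holder3:
  fixes a b c :: "'i \<Rightarrow> real" and \<alpha> \<beta> \<gamma> :: real
  assumes fin: "finite I" and nn: "\<And>i. i \<in> I \<Longrightarrow> a i \<ge> 0 \<and> b i \<ge> 0 \<and> c i \<ge> 0"
    and "\<alpha> \<ge> 0" "\<beta> \<ge> 0" "\<gamma> \<ge> 0" "\<alpha> + \<beta> + \<gamma> = 1"
  shows "(\<Sum>i\<in>I. a i powr \<alpha> * b i powr \<beta> * c i powr \<gamma>)
     \<le> (sum a I) powr \<alpha> * (sum b I) powr \<beta> * (sum c I) powr \<gamma>"
proof -
  define A B C where "A = sum a I" "B = sum b I" "C = sum c I"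
  have A0: "A \<ge> 0" "B \<ge> 0" "C \<ge> 0" unfolding A_B_C_def using nn by (auto intro: sum_nonneg)
  show ?thesis
  proof (cases "A = 0 \<or> B = 0 \<or> C = 0")
    case True
    have "\<forall>i\<in>I. a i = 0 \<or> b i = 0 \<or> c i = 0"
      using True nn fin unfolding A_B_C_def by (subst (asm) sum_nonneg_eq_0_iff; auto)+
    hence "(\<Sum>i\<in>I. a i powr \<alpha> * b i powr \<beta> * c i powr \<gamma>) = 0"
      by (intro sum.neutral) auto
    then show ?thesis by simp
  next
    case False
    then have P: "A > 0" "B > 0" "C > 0" using A0 by auto
    define K where "K = A powr \<alpha> * B powr \<beta> * C powr \<gamma>"
    have Kp: "K > 0" unfolding K_def using P by auto
    have "(\<Sum>i\<in>I. a i powr \<alpha> * b i powr \<beta> * c i powr \<gamma>)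
       = (\<Sum>i\<in>I. K * ((a i / A) powr \<alpha> * (b i / B) powr \<beta> * (c i / C) powr \<gamma>))"
      using P nn unfolding K_def by (intro sum.cong) (auto simp: powr_divide)
    also have "\<dots> \<le> (\<Sum>i\<in>I. K * (\<alpha> * (a i / A) + \<beta> * (b i / B) + \<gamma> * (c i / C)))"
      using P nn Kp assms by (intro sum_mono mult_left_mono amgm3) auto
    also have "\<dots> = K * (\<alpha> * (A / A) + \<beta> * (B / B) + \<gamma> * (C / C))"
      unfolding A_B_C_def
      by (simp add: sum_distrib_left[symmetric] sum.distrib sum_divide_distrib[symmetric] flip: sum_distrib_left)
    also have "\<dots> = K" using P assms by simp
    finally show ?thesis unfolding K_def A_B_C_def .
  qed
qed

lemma trap_nonneg:
  fixes a b r :: real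
  assumes "0 < a" "0 < b" "r \<ge> 1"
  shows "(b powr (r+1) - a powr (r+1)) / ((r+1)*(b-a)) \<ge> 0"
proof (cases a b rule: linorder_cases)
  case less
  then have "a powr (r+1) < b powr (r+1)" using assms by (intro powr_less_mono2) auto
  then show ?thesis using less assms by (intro divide_nonneg_pos) auto
next
  case equal then show ?thesis by simp
next
  case greater
  then have "b powr (r+1) < a powr (r+1)" using assms by (intro powr_less_mono2) auto
  then show ?thesis using greater assms by (intro divide_nonpos_neg) (auto simp: mult_pos_neg)
qed

lemma decomp:
  fixes x y p q r :: real
  assumes "x \<ge> 0" "y \<ge> 0" "1 \<le> p" "1 \<le> q" "1 \<le> r" "1 / r = 1 / p + 1 / q - 1"
  shows "x * y = (x powr q * y powr p) powr (1/r) * (x powr q) powr (1 - 1/p) * (y powr p) powr (1 - 1/q)"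
proof (cases "x = 0 \<or> y = 0")
  case True then show ?thesis by auto
next
  case False
  then have P: "x > 0" "y > 0" using assms by auto
  have e1: "q * (1/r) + q * (1 - 1/p) = 1" using assms by (simp add: field_simps)
  have e2: "p * (1/r) + p * (1 - 1/q) = 1" using assms by (simp add: field_simps)
  have "(x powr q * y powr p) powr (1/r) * (x powr q) powr (1 - 1/p) * (y powr p) powr (1 - 1/q)
     = (x powr (q * (1/r)) * x powr (q * (1 - 1/p))) * (y powr (p * (1/r)) * y powr (p * (1 - 1/q)))"
    using P by (simp add: powr_mult powr_powr)
  also have "\<dots> = x powr (q * (1/r) + q * (1 - 1/p)) * y powr (p * (1/r) + p * (1 - 1/q))"
    by (simp add: powr_add)
  also have "\<dots> = x * y" using e1 e2 P by simp
  finally show ?thesis by simp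
qed

theorem mainTheorem12:
  fixes m n :: nat and p q r :: real
  assumes "odd (m + n)"
    and "1 \<le> p" and "1 \<le> q" and "1 \<le> r"
    and "1 / r = 1 / p + 1 / q - 1"
  shows "(let N = m + n; k = (N - 1) div 2 in
          (2 / (r + 1) + real (N choose k) powr r
           + (\<Sum>j\<in>{0..N-1} - {k}.
                (real (N choose (j+1)) powr (r+1) - real (N choose j) powr (r+1))
                / ((r + 1) * (real (N choose (j+1)) - real (N choose j)))))
          powr (1 / r))
     \<le> (\<Sum>j=0..m. real (m choose j) powr q) powr (1 / q)
        * (\<Sum>j=0..n. real (n choose j) powr p) powr (1 / p)"
proof -
  define N where "N = m + n"
  define k where "k = (N - 1) div 2"
  define c where "c = (\<lambda>j. real (N choose j))"
  define tr where "tr = (\<lambda>j. (c j powr r + c (Suc j) powr r) / 2)"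
  have N1: "N \<ge> 1" and Nk: "N = 2*k+1" using assms(1) unfolding N_def k_def
    by (auto elim!: oddE)
  have r0: "r > 0" using assms by auto
  have cpos: "c j > 0" if "j \<le> N" for j unfolding c_def using that by simp
  have ck: "c (Suc k) = c k"
  proof -
    have "N choose k = N choose (N - k)" using Nk by (intro binomial_symmetric) auto
    moreover have "N - k = Suc k" using Nk by simp
    ultimately show ?thesis unfolding c_def by simp
  qed
  define T where "T = 2 / (r + 1) + c k powr r
           + (\<Sum>j\<in>{0..N-1} - {k}.
                (c (j+1) powr (r+1) - c j powr (r+1)) / ((r + 1) * (c (j+1) - c j)))"
  have kin: "k \<in> {0..N-1}" using Nk by auto
  have fin: "finite ({0..N-1} - {k})" by simp
  have T1: "T \<le> (\<Sum>j\<le>N. c j powr r)"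
  proof -
    have "(\<Sum>j\<in>{0..N-1} - {k}. (c (j+1) powr (r+1) - c j powr (r+1)) / ((r + 1) * (c (j+1) - c j)))
        \<le> (\<Sum>j\<in>{0..N-1} - {k}. tr j)"
      unfolding tr_def
    proof (intro sum_mono)
      fix j assume "j \<in> {0..N-1} - {k}"
      hence "j \<le> N" "Suc j \<le> N" using N1 by auto
      thus "(c (j+1) powr (r+1) - c j powr (r+1)) / ((r + 1) * (c (j+1) - c j))
          \<le> (c j powr r + c (Suc j) powr r) / 2"
        using trap[OF cpos cpos assms(4)] by simp
    qed
    also have "\<dots> = (\<Sum>j\<in>{0..N-1}. tr j) - tr k"
      using kin by (simp add: sum_diff1)
    also have "tr k = c k powr r" unfolding tr_def ck by simp
    finally have 1: "T \<le> 2 / (r+1) + (\<Sum>j\<in>{0..N-1}. tr j)" unfolding T_def by simp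
    have "2 / (r+1) \<le> 1" using assms by simp
    hence 2: "T \<le> 1 + (\<Sum>j<N. tr j)" using 1 N1
      by (metis (no_types, lifting) One_nat_def Suc_pred' add_le_cancel_right atLeast0AtMost
          lessThan_Suc_atMost less_eq_Suc_le order_trans)
    have c0: "c 0 = 1" "c N = 1" unfolding c_def by auto
    have "(\<Sum>j<N. tr j) = ((\<Sum>j<N. c j powr r) + (\<Sum>j<N. c (Suc j) powr r)) / 2"
      unfolding tr_def by (simp only: sum.distrib[symmetric] sum_divide_distrib[symmetric])
    also have "(\<Sum>j<N. c (Suc j) powr r) = (\<Sum>j\<le>N. c j powr r) - 1"
    proof -
      from N1 obtain M where M: "N = Suc M" by (cases N) auto
      have "(\<Sum>j\<le>N. c j powr r) = c 0 powr r + (\<Sum>j\<le>M. c (Suc j) powr r)"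
        unfolding M by (rule sum.atMost_Suc_shift)
      then show ?thesis using c0 by (simp add: M lessThan_Suc_atMost)
    qed
    also have "(\<Sum>j<N. c j powr r) = (\<Sum>j\<le>N. c j powr r) - 1"
      using c0 by (simp add: lessThan_Suc_atMost[symmetric])
    finally show ?thesis using 2 by simp
  qed
  define F where "F = (\<lambda>i. real (m choose i) powr q)"
  define G where "G = (\<lambda>i. real (n choose i) powr p)"
  define SF where "SF = (\<Sum>i\<le>N. F i)"
  define SG where "SG = (\<Sum>i\<le>N. G i)"
  define \<beta> where "\<beta> = 1 - 1/p"
  define \<gamma> where "\<gamma> = 1 - 1/q"
  define S where "S = (\<lambda>j. \<Sum>i\<le>j. F i * G (j - i))"
  have Fn: "F i \<ge> 0" "G i \<ge> 0" for i unfolding F_def G_def by auto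
  have SFp: "SF \<ge> 1" "SG \<ge> 1"
  proof -
    have "F 0 \<le> SF" "G 0 \<le> SG" unfolding SF_def SG_def using Fn
      by (auto intro!: member_le_sum)
    thus "SF \<ge> 1" "SG \<ge> 1" unfolding F_def G_def by auto
  qed
  have bg: "\<beta> \<ge> 0" "\<gamma> \<ge> 0" "1/r + \<beta> + \<gamma> = 1"
    unfolding \<beta>_def \<gamma>_def using assms by auto
  have cj: "c j powr r \<le> S j * (SF powr (\<beta>*r) * SG powr (\<gamma>*r))" if j: "j \<le> N" for j
  proof -
    have "c j = (\<Sum>i\<le>j. real (m choose i) * real (n choose (j - i)))"
      unfolding c_def N_def by (simp flip: vandermonde of_nat_mult)
    also have "\<dots> = (\<Sum>i\<le>j. (F i * G (j-i)) powr (1/r) * F i powr \<beta> * G (j-i) powr \<gamma>)"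
      unfolding F_def G_def \<beta>_def \<gamma>_def using assms
      by (intro sum.cong refl decomp) auto
    also have "\<dots> \<le> S j powr (1/r) * (\<Sum>i\<le>j. F i) powr \<beta> * (\<Sum>i\<le>j. G (j-i)) powr \<gamma>"
      unfolding S_def using Fn bg r0 by (intro holder3) auto
    finally have h: "c j \<le> S j powr (1/r) * (\<Sum>i\<le>j. F i) powr \<beta> * (\<Sum>i\<le>j. G (j-i)) powr \<gamma>" .
    have e: "(\<Sum>i\<le>j. G (j-i)) = (\<Sum>i\<le>j. G i)"
      using sum.atLeastAtMost_rev[of G 0 j] by (simp add: atLeast0AtMost)
    have m2: "(\<Sum>i\<le>j. G i) \<le> SG" unfolding SG_def using j Fn by (intro sum_mono2) auto
    have m1: "(\<Sum>i\<le>j. F i) \<le> SF" unfolding SF_def using j Fn by (intro sum_mono2) auto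
    have n1: "(\<Sum>i\<le>j. F i) \<ge> 0" "(\<Sum>i\<le>j. G i) \<ge> 0" using Fn by (auto intro: sum_nonneg)
    have "(\<Sum>i\<le>j. F i) powr \<beta> \<le> SF powr \<beta>" using m1 n1 bg by (intro powr_mono2) auto
    moreover have "(\<Sum>i\<le>j. G i) powr \<gamma> \<le> SG powr \<gamma>" using m2 n1 bg by (intro powr_mono2) auto
    ultimately have "S j powr (1/r) * (\<Sum>i\<le>j. F i) powr \<beta> * (\<Sum>i\<le>j. G i) powr \<gamma>
        \<le> S j powr (1/r) * SF powr \<beta> * SG powr \<gamma>"
      by (intro mult_mono mult_left_mono) auto
    with h e have "c j \<le> S j powr (1/r) * SF powr \<beta> * SG powr \<gamma>" by simp
    hence "c j powr r \<le> (S j powr (1/r) * SF powr \<beta> * SG powr \<gamma>) powr r"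
      using cpos[OF j] r0 by (intro powr_mono2) auto
    also have "\<dots> = S j * (SF powr (\<beta>*r) * SG powr (\<gamma>*r))"
      using r0 Fn SFp by (simp add: powr_mult powr_powr S_def sum_nonneg)
    finally show ?thesis .
  qed
  have sumS: "(\<Sum>j\<le>N. S j) \<le> SF * SG"
  proof -
    have "(\<Sum>j\<le>N. S j) = (\<Sum>(i,l)\<in>{(i,l). i + l \<le> N}. F i * G l)"
      unfolding S_def by (rule sum.triangle_reindex_eq[symmetric])
    also have "\<dots> \<le> (\<Sum>(i,l)\<in>{..N} \<times> {..N}. F i * G l)"
      using Fn by (intro sum_mono2) auto
    also have "\<dots> = SF * SG" unfolding SF_def SG_def
      by (simp add: sum_product sum.cartesian_product)
    finally show ?thesis .
  qed
  have Kn: "SF powr (\<beta>*r) * SG powr (\<gamma>*r) \<ge> 0" by simp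
  have step2: "(\<Sum>j\<le>N. c j powr r) \<le> SF powr (r/q) * SG powr (r/p)"
  proof -
    have "(\<Sum>j\<le>N. c j powr r) \<le> (\<Sum>j\<le>N. S j * (SF powr (\<beta>*r) * SG powr (\<gamma>*r)))"
      using cj by (intro sum_mono) auto
    also have "\<dots> = (\<Sum>j\<le>N. S j) * (SF powr (\<beta>*r) * SG powr (\<gamma>*r))"
      by (simp add: sum_distrib_right)
    also have "\<dots> \<le> SF * SG * (SF powr (\<beta>*r) * SG powr (\<gamma>*r))"
      using sumS Kn by (intro mult_right_mono) auto
    also have "\<dots> = SF powr (1 + \<beta>*r) * SG powr (1 + \<gamma>*r)"
      using SFp by (simp add: powr_add)
    also have "1 + \<beta>*r = r/q" unfolding \<beta>_def using assms r0 by (simp add: field_simps)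
    also have "1 + \<gamma>*r = r/p" unfolding \<gamma>_def using assms r0 by (simp add: field_simps)
    finally show ?thesis .
  qed
  have T0: "T \<ge> 0"
  proof -
    have "(\<Sum>j\<in>{0..N-1} - {k}. (c (j+1) powr (r+1) - c j powr (r+1)) / ((r + 1) * (c (j+1) - c j))) \<ge> 0"
    proof (intro sum_nonneg)
      fix j assume "j \<in> {0..N-1} - {k}"
      hence "j \<le> N" "Suc j \<le> N" using N1 by auto
      thus "(c (j+1) powr (r+1) - c j powr (r+1)) / ((r + 1) * (c (j+1) - c j)) \<ge> 0"
        using trap_nonneg[OF cpos cpos assms(4)] by simp
    qed
    moreover have "2/(r+1) \<ge> 0" using r0 by simp
    ultimately show ?thesis unfolding T_def by simp
  qed
  have "T powr (1/r) \<le> (SF powr (r/q) * SG powr (r/p)) powr (1/r)"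
    using T1 step2 T0 r0 by (intro powr_mono2) auto
  also have "\<dots> = SF powr (1/q) * SG powr (1/p)"
    using SFp r0 by (simp add: powr_mult powr_powr)
  also have "SF = (\<Sum>j=0..m. real (m choose j) powr q)"
    unfolding SF_def F_def N_def
    by (intro sum.mono_neutral_right) auto
  also have "SG = (\<Sum>j=0..n. real (n choose j) powr p)"
    unfolding SG_def G_def N_def
    by (intro sum.mono_neutral_right) auto
  finally show ?thesis unfolding T_def c_def N_def k_def Let_def by simp
qed

end
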